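(* Let $n\ge2$, let $X\subset\mathbb{R}^n$ be finite with the Euclidean metric $d$, let $\epsilon>0$ and $A\subset X$. Then \[ B_\epsilon(A)\subset\bar A^{\mathfrak{m}}=\operatorname{int}(A)\cup(\partial A)^{\mathfrak{m}}. \]
   Context: $B_\epsilon(A)=\{p\in X: d(p,A)\le\epsilon\}$, where $d(p,A)=\inf_{a\in A}d(p,a)$. $\mathcal{Q}=\mathcal{Q}(\epsilon)$ is the collection of closed cubes $\{x\in\mathbb{R}^n: j_i\frac{\epsilon}{2\sqrt n}\le x_i\le (j_i+1)\frac{\epsilon}{2\sqrt n},\ i=1,\dots,n\}$, $j\in\mathbb{Z}^n$. For a cube $S\in\mathcal{Q}$ and integer $m\ge0$, $S^m=\{x\in\mathbb{R}^n:\max_i|x_i-s_i|\le m\frac{\epsilon}{2\sqrt n}\text{ for some }s\in S\}$. For $B\subset\mathbb{R}^n$, $\mathcal{I}(B)=\{S\in\mathcal{Q}: S\cap B\ne\emptyset\}$. A cube $S\in\mathcal{I}(A)$ is an interior cube of $A$ if $S^1\cap X\subset A$ and every cube $T\in\mathcal{Q}$ with $T\subset S^1$ lies in $\mathcal{I}(A)$; otherwise $S\in\mathcal{I}(A)$ is a boundary cube of $A$. $\operatorname{int}(A)$ is the union of the interior cubes, $\partial A$ the union of the boundary cubes, and $\bar A=\bigcup_{S\in\mathcal{I}(A)}S$. For $Y\subset\mathbb{R}^n$ and integer $N\ge0$, $Y^N=\bigcup_{S\in\mathcal{I}(Y)}S^N$. $\mathfrak{m}$ is the smallest integer with $\mathfrak{m}\ge2\sqrt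 n$. *)

theory Defs
  imports "HOL-Analysis.Analysis"
begin

definition side :: "real \<Rightarrow> 'n::finite itself \<Rightarrow> real" where
  "side eps _ = eps / (2 * sqrt (real CARD('n)))"

definition gcube :: "real \<Rightarrow> int^'n::finite \<Rightarrow> (real^'n) set" where
  "gcube eps j = {x. \<forall>i. of_int (j$i) * side eps TYPE('n) \<le> x$i
                        \<and> x$i \<le> (of_int (j$i) + 1) * side eps TYPE('n)}"

definition cubes :: "real \<Rightarrow> (real^'n::finite) set set" where
  "cubes eps = range (gcube eps)"

definition thicken :: "real \<Rightarrow> (real^'n::finite) set \<Rightarrow> nat \<Rightarrow> (real^'n) set" where
  "thicken eps S m = {x. \<exists>s\<in>S. \<forall>i. \<bar>x$i - s$i\<bar> \<le> real m * side eps TYPE('n)}"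

definition Icubes :: "real \<Rightarrow> (real^'n::finite) set \<Rightarrow> (real^'n) set set" where
  "Icubes eps B = {S\<in>cubes eps. S \<inter> B \<noteq> {}}"

definition interior_cube :: "real \<Rightarrow> (real^'n::finite) set \<Rightarrow> (real^'n) set \<Rightarrow> (real^'n) set \<Rightarrow> bool" where
  "interior_cube eps X A S \<longleftrightarrow> S \<in> Icubes eps A \<and> thicken eps S 1 \<inter> X \<subseteq> A
      \<and> (\<forall>T\<in>cubes eps. T \<subseteq> thicken eps S 1 \<longrightarrow> T \<in> Icubes eps A)"

definition boundary_cube :: "real \<Rightarrow> (real^'n::finite) set \<Rightarrow> (real^'n) set \<Rightarrow> (real^'n) set \<Rightarrow> bool" where
  "boundary_cube eps X A S \<longleftrightarrow> S \<in> Icubes eps A \<and> \<not> interior_cube eps X A S"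

definition cint :: "real \<Rightarrow> (real^'n::finite) set \<Rightarrow> (real^'n) set \<Rightarrow> (real^'n) set" where
  "cint eps X A = \<Union>{S. interior_cube eps X A S}"

definition cbdry :: "real \<Rightarrow> (real^'n::finite) set \<Rightarrow> (real^'n) set \<Rightarrow> (real^'n) set" where
  "cbdry eps X A = \<Union>{S. boundary_cube eps X A S}"

definition cclos :: "real \<Rightarrow> (real^'n::finite) set \<Rightarrow> (real^'n) set" where
  "cclos eps A = \<Union>(Icubes eps A)"

definition thickenset :: "real \<Rightarrow> (real^'n::finite) set \<Rightarrow> nat \<Rightarrow> (real^'n) set" where
  "thickenset eps Y N = (\<Union>S\<in>Icubes eps Y. thicken eps S N)"

definition frakm :: "'n::finite itself \<Rightarrow> nat" where
  "frakm _ = nat \<lceil>2 * sqrt (real CARD('n))\<rceil>"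

(* B_eps(A) = {p \<in> X. d(p,A) \<le> eps}, with d(p,{}) = +\<infinity> (so B_eps({}) = {}). *)
definition Beps :: "(real^'n::finite) set \<Rightarrow> real \<Rightarrow> (real^'n) set \<Rightarrow> (real^'n) set" where
  "Beps X eps A = {p\<in>X. A \<noteq> {} \<and> infdist p A \<le> eps}"

end

theory Submission
  imports Defs
begin

lemma side_pos: "eps > 0 \<Longrightarrow> side eps TYPE('n::finite) > 0"
  unfolding side_def by simp

lemma thicken_gcube:
  fixes j :: "int^'n::finite"
  assumes sp: "side eps TYPE('n) > 0"
  shows "x \<in> thicken eps (gcube eps j) m \<longleftrightarrow>
    (\<forall>i. of_int (j$i) * side eps TYPE('n) - real m * side eps TYPE('n) \<le> x$i
        \<and> x$i \<le> (of_int (j$i) + 1) * side eps TYPE('n) + real m * side eps TYPE('n))"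
    (is "?L \<longleftrightarrow> ?R")
proof
  assume ?L
  then obtain s where s: "s \<in> gcube eps j" and d: "\<forall>i. \<bar>x$i - s$i\<bar> \<le> real m * side eps TYPE('n)"
    unfolding thicken_def by blast
  show ?R
  proof
    fix i
    have "of_int (j$i) * side eps TYPE('n) \<le> s$i \<and> s$i \<le> (of_int (j$i) + 1) * side eps TYPE('n)"
      using s unfolding gcube_def by blast
    moreover have "\<bar>x$i - s$i\<bar> \<le> real m * side eps TYPE('n)" using d by blast
    ultimately show "of_int (j$i) * side eps TYPE('n) - real m * side eps TYPE('n) \<le> x$i
        \<and> x$i \<le> (of_int (j$i) + 1) * side eps TYPE('n) + real m * side eps TYPE('n)"
      by (auto simp: abs_le_iff)
  qed
next
  assume R: ?R
  define s where "s = (\<chi> i. max (of_int (j$i) * side eps TYPE('n)) (min (x$i) ((of_int (j$i) + 1) * side eps TYPE('n))))"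
  have "s \<in> gcube eps j"
    unfolding gcube_def s_def using sp by (auto simp: max_def min_def)
  moreover have "\<forall>i. \<bar>x$i - s$i\<bar> \<le> real m * side eps TYPE('n)"
  proof
    fix i
    have "0 \<le> real m * side eps TYPE('n)" using sp by simp
    then show "\<bar>x$i - s$i\<bar> \<le> real m * side eps TYPE('n)"
      using R[rule_format, of i] sp unfolding s_def by (auto simp: abs_le_iff max_def min_def)
  qed
  ultimately show ?L unfolding thicken_def by blast
qed

lemma gcube_nonempty:
  fixes j :: "int^'n::finite"
  assumes sp: "side eps TYPE('n) > 0"
  shows "(\<chi> i. of_int (j$i) * side eps TYPE('n)) \<in> gcube eps j"
  unfolding gcube_def using sp by auto

lemma gcube_meet:
  fixes j k :: "int^'n::finite"
  assumes sp: "side eps TYPE('n) > 0" and ne: "gcube eps j \<inter> gcube eps k \<noteq> {}"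
  shows "\<bar>j$i - k$i\<bar> \<le> 1"
proof -
  from ne obtain y where y1: "y \<in> gcube eps j" and y2: "y \<in> gcube eps k" by blast
  have a: "of_int (j$i) * side eps TYPE('n) \<le> (of_int (k$i) + 1) * side eps TYPE('n)"
    using y1 y2 unfolding gcube_def by (smt (verit) mem_Collect_eq)
  have b: "of_int (k$i) * side eps TYPE('n) \<le> (of_int (j$i) + 1) * side eps TYPE('n)"
    using y1 y2 unfolding gcube_def by (smt (verit) mem_Collect_eq)
  have "real_of_int (j$i) \<le> of_int (k$i) + 1" using a sp by (simp add: mult_le_cancel_right)
  moreover have "real_of_int (k$i) \<le> of_int (j$i) + 1" using b sp by (simp add: mult_le_cancel_right)
  ultimately have "j$i \<le> k$i + 1" "k$i \<le> j$i + 1" by linarith+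
  then show ?thesis by simp
qed

lemma gcube_adj_sub:
  fixes j k :: "int^'n::finite"
  assumes sp: "side eps TYPE('n) > 0" and adj: "\<forall>i. \<bar>j$i - k$i\<bar> \<le> 1"
  shows "gcube eps k \<subseteq> thicken eps (gcube eps j) 1"
proof
  fix x assume x: "x \<in> gcube eps k"
  show "x \<in> thicken eps (gcube eps j) 1"
    unfolding thicken_gcube[OF sp]
  proof
    fix i
    have h: "real_of_int (j$i) - 1 \<le> of_int (k$i)" "real_of_int (k$i) + 1 \<le> of_int (j$i) + 1 + 1"
      using adj[rule_format, of i] by (simp_all add: abs_le_iff)
    have "(real_of_int (j$i) - 1) * side eps TYPE('n) \<le> of_int (k$i) * side eps TYPE('n)"
      using h(1) sp by (simp add: mult_right_mono)
    moreover have "(real_of_int (k$i) + 1) * side eps TYPE('n) \<le> (of_int (j$i) + 1 + 1) * side eps TYPE('n)"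
      using h(2) sp by (simp add: mult_right_mono)
    moreover have "of_int (k$i) * side eps TYPE('n) \<le> x$i \<and> x$i \<le> (of_int (k$i) + 1) * side eps TYPE('n)"
      using x unfolding gcube_def by blast
    ultimately show "of_int (j$i) * side eps TYPE('n) - real 1 * side eps TYPE('n) \<le> x$i
        \<and> x$i \<le> (of_int (j$i) + 1) * side eps TYPE('n) + real 1 * side eps TYPE('n)"
      by (simp add: algebra_simps)
  qed
qed

lemma gcube_adj_meet:
  fixes j k :: "int^'n::finite"
  assumes sp: "side eps TYPE('n) > 0" and adj: "\<forall>i. \<bar>j$i - k$i\<bar> \<le> 1"
  shows "gcube eps j \<inter> gcube eps k \<noteq> {}"
proof -
  define y where "y = (\<chi> i. of_int (max (j$i) (k$i)) * side eps TYPE('n))"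
  have "y \<in> gcube eps j \<and> y \<in> gcube eps k"
    unfolding gcube_def y_def
  proof (simp, intro conjI allI)
    fix i
    have h: "max (j$i) (k$i) \<le> j$i + 1" "max (j$i) (k$i) \<le> k$i + 1"
      using adj[rule_format, of i] by (auto simp: abs_le_iff)
    have h2: "real_of_int (max (j$i) (k$i)) \<le> of_int (j$i) + 1" "real_of_int (max (j$i) (k$i)) \<le> of_int (k$i) + 1"
      using h by linarith+
    show "of_int (j $ i) * side eps TYPE('n) \<le> of_int (max (j $ i) (k $ i)) * side eps TYPE('n)"
      using sp by (intro mult_right_mono) auto
    show "of_int (k $ i) * side eps TYPE('n) \<le> of_int (max (j $ i) (k $ i)) * side eps TYPE('n)"
      using sp by (intro mult_right_mono) auto
    show "of_int (max (j $ i) (k $ i)) * side eps TYPE('n) \<le> (of_int (j $ i) + 1) * side eps TYPE('n)"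
      using sp h2 by (intro mult_right_mono) auto
    show "of_int (max (j $ i) (k $ i)) * side eps TYPE('n) \<le> (of_int (k $ i) + 1) * side eps TYPE('n)"
      using sp h2 by (intro mult_right_mono) auto
  qed
  then show ?thesis by blast
qed


theorem corollary4p4:
  fixes X A :: "(real^'n::finite) set" and eps :: real
  assumes "CARD('n) \<ge> 2" and "finite X" and "eps > 0" and "A \<subseteq> X"
  shows "Beps X eps A \<subseteq> thickenset eps (cclos eps A) (frakm TYPE('n))
       \<and> thickenset eps (cclos eps A) (frakm TYPE('n))
           = cint eps X A \<union> thickenset eps (cbdry eps X A) (frakm TYPE('n))"
proof -
  let ?s = "side eps TYPE('n)"
  let ?m = "frakm TYPE('n)"
  have sp: "?s > 0" using side_pos assms(3) by blast
  have msd: "eps \<le> real ?m * ?s"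
  proof -
    have q: "sqrt (real CARD('n)) > 0" by simp
    have "2 * sqrt (real CARD('n)) \<le> real ?m" unfolding frakm_def by linarith
    then have "(2 * sqrt (real CARD('n))) * ?s \<le> real ?m * ?s" using sp by (intro mult_right_mono) auto
    moreover have "(2 * sqrt (real CARD('n))) * ?s = eps" unfolding side_def using q by simp
    ultimately show ?thesis by simp
  qed
  have cub: "T \<in> cubes eps \<Longrightarrow> \<exists>j. T = gcube eps j" for T :: "(real^'n) set"
    unfolding cubes_def by blast
  have Icub: "gcube eps j \<in> cubes eps" for j :: "int^'n" unfolding cubes_def by blast
  have flo: "x \<in> gcube eps (\<chi> c. \<lfloor>x$c / ?s\<rfloor>)" for x :: "real^'n"
  proof -
    have "of_int \<lfloor>x$c / ?s\<rfloor> * ?s \<le> x$c \<and> x$c \<le> (of_int \<lfloor>x$c / ?s\<rfloor> + 1) * ?s" for c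
    proof -
      have a1: "of_int \<lfloor>x$c / ?s\<rfloor> \<le> x$c / ?s" and a2: "x$c / ?s \<le> of_int \<lfloor>x$c / ?s\<rfloor> + 1" by linarith+
      have "of_int \<lfloor>x$c / ?s\<rfloor> * ?s \<le> x$c" using a1 sp by (metis pos_le_divide_eq)
      moreover have "x$c \<le> (of_int \<lfloor>x$c / ?s\<rfloor> + 1) * ?s" using a2 sp by (metis pos_divide_le_eq)
      ultimately show ?thesis by blast
    qed
    then show ?thesis unfolding gcube_def by simp
  qed
  have part1: "Beps X eps A \<subseteq> thickenset eps (cclos eps A) ?m"
  proof
    fix p assume "p \<in> Beps X eps A"
    then have ne: "A \<noteq> {}" and pd: "infdist p A \<le> eps" unfolding Beps_def by auto
    have fA: "finite A" using assms(2,4) finite_subset by blast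
    obtain a where aA: "a \<in> A" and ad: "infdist p A = dist p a"
      using infdist_attains_inf[OF finite_imp_closed[OF fA] ne] by blast
    let ?S = "gcube eps (\<chi> c. \<lfloor>a$c / ?s\<rfloor>)"
    have aS: "a \<in> ?S" by (rule flo)
    have SI: "?S \<in> Icubes eps A" unfolding Icubes_def using aS aA Icub by blast
    then have "?S \<subseteq> cclos eps A" unfolding cclos_def by blast
    then have "?S \<in> Icubes eps (cclos eps A)" unfolding Icubes_def using aS Icub by blast
    moreover have "p \<in> thicken eps ?S ?m"
      unfolding thicken_def mem_Collect_eq
    proof (intro bexI[OF _ aS] allI)
      fix i
      have "\<bar>p$i - a$i\<bar> = \<bar>(p - a)$i\<bar>" by simp
      also have "\<dots> \<le> norm (p - a)" by (rule component_le_norm_cart)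
      also have "\<dots> = dist p a" by (simp add: dist_norm)
      finally show "\<bar>p$i - a$i\<bar> \<le> real ?m * ?s" using ad pd msd by linarith
    qed
    ultimately show "p \<in> thickenset eps (cclos eps A) ?m" unfolding thickenset_def by blast
  qed
  have part2a: "cint eps X A \<union> thickenset eps (cbdry eps X A) ?m \<subseteq> thickenset eps (cclos eps A) ?m"
  proof -
    have "cint eps X A \<subseteq> thickenset eps (cclos eps A) ?m"
    proof
      fix x assume "x \<in> cint eps X A"
      then obtain S where Si: "interior_cube eps X A S" and xS: "x \<in> S" unfolding cint_def by blast
      then have SI: "S \<in> Icubes eps A" unfolding interior_cube_def by blast
      then have "S \<subseteq> cclos eps A" unfolding cclos_def by blast
      then have "S \<in> Icubes eps (cclos eps A)" using SI xS unfolding Icubes_def by blast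
      moreover obtain j where Sj: "S = gcube eps j" using SI cub unfolding Icubes_def by blast
      have "x \<in> thicken eps S ?m" using xS sp unfolding thicken_def by (auto intro!: bexI[of _ x])
      ultimately show "x \<in> thickenset eps (cclos eps A) ?m" unfolding thickenset_def by blast
    qed
    moreover have "Icubes eps (cbdry eps X A) \<subseteq> Icubes eps (cclos eps A)"
    proof -
      have "cbdry eps X A \<subseteq> cclos eps A" unfolding cbdry_def cclos_def boundary_cube_def by blast
      then show ?thesis unfolding Icubes_def by blast
    qed
    then have "thickenset eps (cbdry eps X A) ?m \<subseteq> thickenset eps (cclos eps A) ?m"
      unfolding thickenset_def by blast
    ultimately show ?thesis by blast
  qed
  have part2b: "thickenset eps (cclos eps A) ?m \<subseteq> cint eps X A \<union> thickenset eps (cbdry eps X A) ?m"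
  proof
    fix x assume "x \<in> thickenset eps (cclos eps A) ?m"
    then obtain T where TI: "T \<in> Icubes eps (cclos eps A)" and xT: "x \<in> thicken eps T ?m"
      unfolding thickenset_def by blast
    obtain j0 where Tj: "T = gcube eps j0" using TI cub unfolding Icubes_def by blast
    define k where "k = (\<chi> c. \<lfloor>x$c / ?s\<rfloor>)"
    have xk: "x \<in> gcube eps k" unfolding k_def by (rule flo)
    have kb: "of_int (k$c) * ?s \<le> x$c \<and> x$c \<le> (of_int (k$c) + 1) * ?s" for c
      using xk unfolding gcube_def by blast
    have kb2: "x$c < (of_int (k$c) + 1) * ?s" for c
    proof -
      have "x$c / ?s < of_int (k$c) + 1" unfolding k_def by simp
      then show ?thesis using sp by (metis pos_divide_less_eq)
    qed
    define \<mu> where "\<mu> = (\<lambda>j::int^'n. \<Sum>c\<in>UNIV. nat \<bar>j$c - k$c\<bar>)"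
    have key: "gcube eps j \<in> Icubes eps (cclos eps A) \<Longrightarrow> x \<in> thicken eps (gcube eps j) ?m
       \<Longrightarrow> x \<in> cint eps X A \<union> thickenset eps (cbdry eps X A) ?m" for j
    proof (induction "\<mu> j" arbitrary: j rule: less_induct)
      case (less j)
      show ?case
      proof (cases "gcube eps j \<in> Icubes eps (cbdry eps X A)")
        case True
        then show ?thesis using less.prems(2) unfolding thickenset_def by blast
      next
        case False
        have nej: "gcube eps j \<noteq> {}" using gcube_nonempty[OF sp] by blast
        from less.prems(1) obtain S where SA: "S \<in> Icubes eps A" and SJ: "S \<inter> gcube eps j \<noteq> {}"
          unfolding Icubes_def cclos_def by blast
        have Sint: "interior_cube eps X A S"
        proof (rule ccontr)
          assume "\<not> interior_cube eps X A S"
          then have "S \<subseteq> cbdry eps X A" using SA unfolding cbdry_def boundary_cube_def by blast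
          then have "gcube eps j \<in> Icubes eps (cbdry eps X A)" using SJ Icub unfolding Icubes_def by blast
          then show False using False by blast
        qed
        obtain i where Si: "S = gcube eps i" using SA cub unfolding Icubes_def by blast
        have "gcube eps j \<subseteq> thicken eps S 1"
          unfolding Si by (rule gcube_adj_sub[OF sp]) (use gcube_meet[OF sp] SJ Si in blast)
        then have jA: "gcube eps j \<in> Icubes eps A" using Sint Icub unfolding interior_cube_def by blast
        have jint: "interior_cube eps X A (gcube eps j)"
        proof (rule ccontr)
          assume "\<not> interior_cube eps X A (gcube eps j)"
          then have "gcube eps j \<subseteq> cbdry eps X A" using jA unfolding cbdry_def boundary_cube_def by blast
          then have "gcube eps j \<in> Icubes eps (cbdry eps X A)" using nej Icub unfolding Icubes_def by blast
          then show False using False by blast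
        qed
        then have jc: "gcube eps j \<subseteq> cint eps X A" unfolding cint_def by blast
        show ?thesis
        proof (cases "j = k")
          case True
          then show ?thesis using xk jc by blast
        next
          case False
          define j' where "j' = (\<chi> c. if j$c < k$c then j$c + 1 else if k$c < j$c then j$c - 1 else j$c)"
          have adj: "\<forall>c. \<bar>j$c - j'$c\<bar> \<le> 1" unfolding j'_def by auto
          have "\<mu> j' < \<mu> j" unfolding \<mu>_def
          proof (rule sum_strict_mono_ex1)
            show "\<forall>c\<in>UNIV. nat \<bar>j'$c - k$c\<bar> \<le> nat \<bar>j$c - k$c\<bar>" unfolding j'_def by auto
            from False obtain c where "j$c \<noteq> k$c" by (metis vec_eq_iff)
            then show "\<exists>c\<in>UNIV. nat \<bar>j'$c - k$c\<bar> < nat \<bar>j$c - k$c\<bar>" unfolding j'_def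
              by (intro bexI[of _ c]) auto
          qed simp
          moreover have "gcube eps j' \<in> Icubes eps (cclos eps A)"
          proof -
            have "gcube eps j \<inter> gcube eps j' \<noteq> {}" by (rule gcube_adj_meet[OF sp adj])
            moreover have "gcube eps j \<subseteq> cclos eps A" using jA unfolding cclos_def by blast
            ultimately show ?thesis using Icub unfolding Icubes_def by blast
          qed
          moreover have "x \<in> thicken eps (gcube eps j') ?m"
            unfolding thicken_gcube[OF sp]
          proof
            fix c
            have old: "of_int (j$c) * ?s - real ?m * ?s \<le> x$c \<and> x$c \<le> (of_int (j$c) + 1) * ?s + real ?m * ?s"
              using less.prems(2) unfolding thicken_gcube[OF sp] by blast
            have ms0: "0 \<le> real ?m * ?s" using sp by simp
            consider "j$c < k$c" | "k$c < j$c" | "j$c = k$c" by linarith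
            then show "of_int (j'$c) * ?s - real ?m * ?s \<le> x$c \<and> x$c \<le> (of_int (j'$c) + 1) * ?s + real ?m * ?s"
            proof cases
              case 1
              then have e: "j'$c = j$c + 1" unfolding j'_def by simp
              have "real_of_int (j$c + 1) \<le> of_int (k$c)" using 1 by linarith
              then have "of_int (j$c + 1) * ?s \<le> of_int (k$c) * ?s" using sp by (intro mult_right_mono) auto
              moreover have "(of_int (j$c) + 1) * ?s \<le> (of_int (j$c + 1) + 1) * ?s" using sp by (intro mult_right_mono) auto
              ultimately show ?thesis using e old kb[of c] ms0 by auto
            next
              case 2
              then have e: "j'$c = j$c - 1" unfolding j'_def by simp
              have "real_of_int (k$c) \<le> of_int (j$c - 1)" using 2 by linarith
              then have "(of_int (k$c) + 1) * ?s \<le> (of_int (j$c - 1) + 1) * ?s" using sp by (intro mult_right_mono) auto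
              moreover have "of_int (j$c - 1) * ?s \<le> of_int (j$c) * ?s" using sp by (intro mult_right_mono) auto
              ultimately show ?thesis using e old kb2[of c] ms0 by auto
            next
              case 3
              then have "j'$c = j$c" unfolding j'_def by simp
              then show ?thesis using old by simp
            qed
          qed
          ultimately show ?thesis using less.hyps by blast
        qed
      qed
    qed
    show "x \<in> cint eps X A \<union> thickenset eps (cbdry eps X A) ?m"
      using key TI xT unfolding Tj by blast
  qed
  show ?thesis using part1 part2a part2b by blast
qed

end
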